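(* Let $X=(X(t))_{t\ge0}$ be a centered Gaussian process, self-similar of order $\beta\in(0,1)$, satisfying (H.1) with parameters $\alpha,\lambda,\psi$. Then there exists a continuous function $u_1:(0,\infty)\to\mathbb{R}$ such that for all $s>0$, $$\mathbb{E}\big[(X(s+1)-X(s))^2\big]=2\lambda s^{2\beta-\alpha}(1+u_1(s)).$$ Furthermore, for every $\eta>0$ there exists a constant $C_\eta>0$ such that for all $s\ge\eta$, $|u_1(s)|\le C_\eta s^{-\delta_1}$, where $\delta_1=1-\alpha$ if $\alpha<1$ and $\delta_1=2-\alpha$ if $\alpha\ge1$.
   Context: Self-similar of order $\beta$ means $(X(ct))_{t\ge0}\overset{law}{=}(c^\beta X(t))_{t\ge0}$ for all $c>0$. Let $\phi(x)=\mathbb{E}[X(1)X(x)]$, $x\ge1$, so $\mathbb{E}[X(s)X(t)]=s^{2\beta}\phi(t/s)$ for $0<s\le t$. (H.1): there is $\alpha\in(0,2\beta]$ with $\phi(x)=-\lambda(x-1)^\alpha+\psi(x)$, where $\lambda>0$, $\psi$ is twice differentiable on an open set containing $[1,\infty)$, and there is $C\ge0$ such that for $x\in(1,\infty)$: $|\psi'(x)|\le Cx^{\alpha-1}$, $|\psi''(x)|\le Cx^{-1}(x-1)^{\alpha-1}$, and $\psi'(1)=\beta\psi(1)$ when $\alpha\ge1$. *)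

theory Defs
  imports "HOL-Probability.Probability"
begin

definition gaussian_rv :: "'a measure \<Rightarrow> ('a \<Rightarrow> real) \<Rightarrow> bool" where
  "gaussian_rv M Y \<longleftrightarrow>
     Y \<in> borel_measurable M \<and>
     ((\<exists>\<mu> \<sigma>. \<sigma> > 0 \<and> distributed M lborel Y (normal_density \<mu> \<sigma>)) \<or>
      (\<exists>c. AE \<omega> in M. Y \<omega> = c))"

definition gaussian_process :: "'a measure \<Rightarrow> (real \<Rightarrow> 'a \<Rightarrow> real) \<Rightarrow> bool" where
  "gaussian_process M X \<longleftrightarrow>
     (\<forall>t\<ge>0. X t \<in> borel_measurable M) \<and>
     (\<forall>ts as :: real list. set ts \<subseteq> {0..} \<and> length as = length ts \<longrightarrow>
        gaussian_rv M (\<lambda>\<omega>. \<Sum>i<length ts. as ! i * X (ts ! i) \<omega>))"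

definition centered_process :: "'a measure \<Rightarrow> (real \<Rightarrow> 'a \<Rightarrow> real) \<Rightarrow> bool" where
  "centered_process M X \<longleftrightarrow> (\<forall>t\<ge>0. integrable M (X t) \<and> integral\<^sup>L M (X t) = 0)"

definition self_similar :: "'a measure \<Rightarrow> (real \<Rightarrow> 'a \<Rightarrow> real) \<Rightarrow> real \<Rightarrow> bool" where
  "self_similar M X \<beta> \<longleftrightarrow>
     (\<forall>c>0. \<forall>ts :: real list. set ts \<subseteq> {0..} \<longrightarrow>
        distr M (PiM {..<length ts} (\<lambda>_. borel)) (\<lambda>\<omega>. \<lambda>i\<in>{..<length ts}. X (c * ts ! i) \<omega>) =
        distr M (PiM {..<length ts} (\<lambda>_. borel)) (\<lambda>\<omega>. \<lambda>i\<in>{..<length ts}. c powr \<beta> * X (ts ! i) \<omega>))"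

definition H1 :: "(real \<Rightarrow> real) \<Rightarrow> real \<Rightarrow> real \<Rightarrow> real \<Rightarrow> (real \<Rightarrow> real) \<Rightarrow> bool" where
  "H1 \<phi> \<beta> \<alpha> lam \<psi> \<longleftrightarrow>
     0 < \<alpha> \<and> \<alpha> \<le> 2 * \<beta> \<and> lam > 0 \<and>
     (\<forall>x\<ge>1. \<phi> x = - lam * (x - 1) powr \<alpha> + \<psi> x) \<and>
     (\<exists>S \<psi>' \<psi>'' C. open S \<and> {1..} \<subseteq> S \<and> C \<ge> 0 \<and>
        (\<forall>x\<in>S. (\<psi> has_real_derivative \<psi>' x) (at x) \<and> (\<psi>' has_real_derivative \<psi>'' x) (at x)) \<and>
        (\<forall>x>1. \<bar>\<psi>' x\<bar> \<le> C * x powr (\<alpha> - 1) \<and>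
               \<bar>\<psi>'' x\<bar> \<le> C * x powr (-1) * (x - 1) powr (\<alpha> - 1)) \<and>
        (\<alpha> \<ge> 1 \<longrightarrow> \<psi>' 1 = \<beta> * \<psi> 1))"

end

theory Submission
  imports Defs
begin


lemma normal_sq_int: assumes "\<sigma> > 0" shows "integrable lborel (\<lambda>x. normal_density \<mu> \<sigma> x * x^2)"
proof -
  have "integrable lborel (\<lambda>x. normal_density \<mu> \<sigma> x * (x - \<mu>)^2 + 2*\<mu> * (normal_density \<mu> \<sigma> x * (x - \<mu>)^1) + \<mu>^2 * (normal_density \<mu> \<sigma> x * (x - \<mu>)^0))"
    using integrable_normal_moment[of \<sigma> \<mu> 2] integrable_normal_moment[of \<sigma> \<mu> 1] integrable_normal_moment[of \<sigma> \<mu> 0] assms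
    by (auto simp del: power_0 power_one_right)
  moreover have "(\<lambda>x. normal_density \<mu> \<sigma> x * (x - \<mu>)^2 + 2*\<mu> * (normal_density \<mu> \<sigma> x * (x - \<mu>)^1) + \<mu>^2 * (normal_density \<mu> \<sigma> x * (x - \<mu>)^0)) = (\<lambda>x. normal_density \<mu> \<sigma> x * x^2)"
    by (auto simp: fun_eq_iff power2_eq_square algebra_simps)
  ultimately show ?thesis by simp
qed

lemma gaussian_sq_int:
  assumes "prob_space M" "gaussian_rv M Y"
  shows "integrable M (\<lambda>\<omega>. Y \<omega> ^ 2)"
proof -
  interpret prob_space M by fact
  have Ym: "Y \<in> borel_measurable M" using assms(2) by (simp add: gaussian_rv_def)
  from assms(2) consider (n) \<mu> \<sigma> where "\<sigma> > 0" "distributed M lborel Y (normal_density \<mu> \<sigma>)"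
    | (c) c where "AE \<omega> in M. Y \<omega> = c" unfolding gaussian_rv_def by blast
  then show ?thesis
  proof cases
    case n
    show ?thesis
      using distributed_integrable[OF n(2), of "\<lambda>x. x^2"] normal_sq_int[OF n(1)] by simp
  next
    case c
    have "integrable M (\<lambda>\<omega>. c^2)" by simp
    then show ?thesis
      by (rule integrable_cong_AE_imp) (use c Ym in auto)
  qed
qed


lemma gp_sq1:
  assumes "prob_space M" "gaussian_process M X" "t \<ge> 0"
  shows "integrable M (\<lambda>\<omega>. X t \<omega> ^ 2)"
proof -
  have "gaussian_rv M (\<lambda>\<omega>. \<Sum>i<length [t]. [1::real] ! i * X ([t] ! i) \<omega>)"
    apply (rule conjunct2[OF assms(2)[unfolded gaussian_process_def], rule_format])
    using assms(3) by auto
  then have "gaussian_rv M (X t)" by simp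
  then show ?thesis using gaussian_sq_int[OF assms(1)] by blast
qed

lemma gp_sq2:
  assumes "prob_space M" "gaussian_process M X" "t \<ge> 0" "s \<ge> 0"
  shows "integrable M (\<lambda>\<omega>. (X s \<omega> - X t \<omega>) ^ 2)"
proof -
  have "gaussian_rv M (\<lambda>\<omega>. \<Sum>i<length [s,t]. [1::real,-1] ! i * X ([s,t] ! i) \<omega>)"
    apply (rule conjunct2[OF assms(2)[unfolded gaussian_process_def], rule_format])
    using assms(3,4) by auto
  then have "gaussian_rv M (\<lambda>\<omega>. X s \<omega> - X t \<omega>)" by (simp add: eval_nat_numeral)
  then show ?thesis using gaussian_sq_int[OF assms(1)] by blast
qed

lemma ss_cov:
  assumes "prob_space M" "\<forall>t\<ge>0. X t \<in> borel_measurable M" "self_similar M X \<beta>"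
    "c > 0" "a \<ge> 0" "b \<ge> 0"
  shows "integral\<^sup>L M (\<lambda>\<omega>. X (c*a) \<omega> * X (c*b) \<omega>) = c powr (2*\<beta>) * integral\<^sup>L M (\<lambda>\<omega>. X a \<omega> * X b \<omega>)"
proof -
  let ?P = "PiM {..<length [a,b]} (\<lambda>_. borel) :: (nat \<Rightarrow> real) measure"
  let ?F1 = "\<lambda>\<omega>. \<lambda>i\<in>{..<length [a,b]}. X (c * [a,b] ! i) \<omega>"
  let ?F2 = "\<lambda>\<omega>. \<lambda>i\<in>{..<length [a,b]}. c powr \<beta> * X ([a,b] ! i) \<omega>"
  have D: "distr M ?P ?F1 = distr M ?P ?F2"
    apply (rule assms(3)[unfolded self_similar_def, rule_format]) 
    using assms(4,5,6) by auto
  have ma: "X (c*a) \<in> borel_measurable M" "X (c*b) \<in> borel_measurable M"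
    "X a \<in> borel_measurable M" "X b \<in> borel_measurable M"
    using assms(2) assms(4,5,6) by (meson less_imp_le mult_nonneg_nonneg)+
  have m1: "?F1 \<in> measurable M ?P"
  proof (rule measurable_restrict)
    fix i assume "i \<in> {..<length [a,b]}"
    then have "i = 0 \<or> i = 1" by auto
    then show "(\<lambda>\<omega>. X (c * [a,b] ! i) \<omega>) \<in> measurable M borel"
    proof (elim disjE)
      assume "i = 0" then show ?thesis using ma by (simp add: eta_contract_eq)
    next
      assume "i = 1" then show ?thesis using ma by (simp add: eta_contract_eq)
    qed
  qed
  have m2: "?F2 \<in> measurable M ?P"
  proof (rule measurable_restrict)
    fix i assume "i \<in> {..<length [a,b]}"
    then have "i = 0 \<or> i = 1" by auto
    then show "(\<lambda>\<omega>. c powr \<beta> * X ([a,b] ! i) \<omega>) \<in> measurable M borel"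
    proof (elim disjE)
      assume "i = 0" then show ?thesis using ma by (simp add: eta_contract_eq)
    next
      assume "i = 1" then show ?thesis using ma by (simp add: eta_contract_eq)
    qed
  qed
  have g: "(\<lambda>v::nat\<Rightarrow>real. v 0 * v 1) \<in> borel_measurable ?P"
    by (rule borel_measurable_times; rule measurable_component_singleton; simp)
  have "integral\<^sup>L M (\<lambda>\<omega>. X (c*a) \<omega> * X (c*b) \<omega>) = integral\<^sup>L (distr M ?P ?F1) (\<lambda>v. v 0 * v 1)"
    by (subst integral_distr[OF m1 g]) simp
  also have "\<dots> = integral\<^sup>L (distr M ?P ?F2) (\<lambda>v. v 0 * v 1)" by (simp only: D)
  also have "\<dots> = integral\<^sup>L M (\<lambda>\<omega>. (c powr \<beta> * c powr \<beta>) * (X a \<omega> * X b \<omega>))"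
    by (subst integral_distr[OF m2 g]) (simp add: ac_simps)
  also have "\<dots> = c powr (2*\<beta>) * integral\<^sup>L M (\<lambda>\<omega>. X a \<omega> * X b \<omega>)"
    by (simp add: powr_add[symmetric])
  finally show ?thesis .
qed


lemma g_deriv:
  fixes \<psi> \<psi>' \<psi>'' :: "real \<Rightarrow> real"
  assumes S: "{1..} \<subseteq> S"
   and d1: "\<forall>x\<in>S. (\<psi> has_real_derivative \<psi>' x) (at x) \<and> (\<psi>' has_real_derivative \<psi>'' x) (at x)"
   and h: "h \<ge> 0"
  shows "((\<lambda>h. ((1+h) powr (2*\<beta>) + 1)*\<psi> 1 - 2*\<psi>(1+h)) has_real_derivative
            (2*\<beta>*(1+h) powr (2*\<beta>-1) * \<psi> 1 - 2*\<psi>'(1+h))) (at h)"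
    and "((\<lambda>h. 2*\<beta>*(1+h) powr (2*\<beta>-1) * \<psi> 1 - 2*\<psi>'(1+h)) has_real_derivative
            (2*\<beta>*(2*\<beta>-1)*(1+h) powr (2*\<beta>-2) * \<psi> 1 - 2*\<psi>''(1+h))) (at h)"
proof -
  have in1: "1 + h \<in> S" using S h by auto
  have dl: "((\<lambda>h. 1 + h) has_real_derivative 1) (at h)"
    by (auto intro!: derivative_eq_intros)
  have p1: "((\<lambda>h. (1+h) powr (2*\<beta>)) has_real_derivative (2*\<beta>) * (1+h) powr (2*\<beta> - of_nat 1) * 1) (at h)"
    by (rule DERIV_fun_powr[OF dl]) (use h in auto)
  have p2: "((\<lambda>h. (1+h) powr (2*\<beta>-1)) has_real_derivative (2*\<beta>-1) * (1+h) powr (2*\<beta>-1 - of_nat 1) * 1) (at h)"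
    by (rule DERIV_fun_powr[OF dl]) (use h in auto)
  have q1: "((\<lambda>h. \<psi> (1+h)) has_real_derivative \<psi>' (1+h) * 1) (at h)"
    by (rule DERIV_chain2[OF _ dl]) (use d1 in1 in auto)
  have q2: "((\<lambda>h. \<psi>' (1+h)) has_real_derivative \<psi>'' (1+h) * 1) (at h)"
    by (rule DERIV_chain2[OF _ dl]) (use d1 in1 in auto)
  show "((\<lambda>h. ((1+h) powr (2*\<beta>) + 1)*\<psi> 1 - 2*\<psi>(1+h)) has_real_derivative
            (2*\<beta>*(1+h) powr (2*\<beta>-1) * \<psi> 1 - 2*\<psi>'(1+h))) (at h)"
    using p1 q1 h by (auto intro!: derivative_eq_intros)
  have e: "2*\<beta>-1-1 = 2*\<beta>-2" by simp
  show "((\<lambda>h. 2*\<beta>*(1+h) powr (2*\<beta>-1) * \<psi> 1 - 2*\<psi>'(1+h)) has_real_derivative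
            (2*\<beta>*(2*\<beta>-1)*(1+h) powr (2*\<beta>-2) * \<psi> 1 - 2*\<psi>''(1+h))) (at h)"
    using p2 q2 h by (auto intro!: derivative_eq_intros simp: e)
qed

lemma g_bound1:
  fixes \<psi> \<psi>' \<psi>'' :: "real \<Rightarrow> real"
  assumes S: "{1..} \<subseteq> S" and C: "C \<ge> 0"
   and d1: "\<forall>x\<in>S. (\<psi> has_real_derivative \<psi>' x) (at x) \<and> (\<psi>' has_real_derivative \<psi>'' x) (at x)"
   and b: "\<forall>x>1. \<bar>\<psi>' x\<bar> \<le> C * x powr (\<alpha>-1) \<and> \<bar>\<psi>'' x\<bar> \<le> C * x powr (-1) * (x-1) powr (\<alpha>-1)"
   and \<beta>: "0 < \<beta>" "\<beta> < 1" and H: "H > 0" and \<alpha>: "\<alpha> < 1"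
  defines "g \<equiv> \<lambda>h. ((1+h) powr (2*\<beta>) + 1)*\<psi> 1 - 2*\<psi>(1+h)"
  shows "\<exists>K\<ge>0. \<forall>h. 0 < h \<and> h \<le> H \<longrightarrow> \<bar>g h\<bar> \<le> K*h"
proof -
  define g' where "g' = (\<lambda>h. 2*\<beta>*(1+h) powr (2*\<beta>-1) * \<psi> 1 - 2*\<psi>'(1+h))"
  define K where "K = 2*\<beta>*(1+H)*\<bar>\<psi> 1\<bar> + 2*C"
  have K0: "K \<ge> 0" using \<beta> H C by (simp add: K_def)
  have g'b: "\<bar>g' x\<bar> \<le> K" if "0 < x" "x \<le> H" for x
  proof -
    have "(1+x) powr (2*\<beta>-1) \<le> (1+x) powr 1" using that \<beta> by (intro powr_mono) auto
    also have "\<dots> \<le> 1 + H" using that by simp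
    finally have a: "(1+x) powr (2*\<beta>-1) \<le> 1 + H" .
    have "(1+x) powr (\<alpha>-1) \<le> (1+x) powr 0" using that \<alpha> by (intro powr_mono) auto
    then have "(1+x) powr (\<alpha>-1) \<le> 1" using that by simp
    then have "C * (1+x) powr (\<alpha>-1) \<le> C * 1" using C by (intro mult_left_mono) auto
    moreover have "\<bar>\<psi>' (1+x)\<bar> \<le> C * (1+x) powr (\<alpha>-1)" using b that by simp
    ultimately have c: "\<bar>\<psi>' (1+x)\<bar> \<le> C" by linarith
    have "\<bar>g' x\<bar> \<le> 2*\<beta>*(1+x) powr (2*\<beta>-1) * \<bar>\<psi> 1\<bar> + 2*\<bar>\<psi>'(1+x)\<bar>"
      unfolding g'_def using \<beta> abs_triangle_ineq4[of "2*\<beta>*(1+x) powr (2*\<beta>-1) * \<psi> 1" "2*\<psi>'(1+x)"]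
      by (simp add: abs_mult)
    also have "\<dots> \<le> 2*\<beta>*(1+H) * \<bar>\<psi> 1\<bar> + 2*C"
      using \<beta> a c by (intro add_mono mult_right_mono mult_left_mono) auto
    finally show ?thesis by (simp add: K_def)
  qed
  have g0: "g 0 = 0" by (simp add: g_def)
  show ?thesis
  proof (intro exI[of _ K] conjI allI impI K0)
    fix h assume h: "0 < h \<and> h \<le> H"
    have dd: "\<And>x. 0 \<le> x \<Longrightarrow> x \<le> h \<Longrightarrow> DERIV g x :> g' x"
      unfolding g_def g'_def using g_deriv(1)[OF S d1] by blast
    from MVT2[of 0 h, OF _ dd] h obtain z where z: "0 < z" "z < h" "g h - g 0 = (h - 0) * g' z" by auto
    then have "\<bar>g h\<bar> = h * \<bar>g' z\<bar>" using g0 h by (simp add: abs_mult)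
    also have "\<dots> \<le> h * K" using g'b[of z] z h by (intro mult_left_mono) auto
    finally show "\<bar>g h\<bar> \<le> K * h" by (simp add: mult.commute)
  qed
qed

lemma g_bound2:
  fixes \<psi> \<psi>' \<psi>'' :: "real \<Rightarrow> real"
  assumes S: "{1..} \<subseteq> S" and C: "C \<ge> 0"
   and d1: "\<forall>x\<in>S. (\<psi> has_real_derivative \<psi>' x) (at x) \<and> (\<psi>' has_real_derivative \<psi>'' x) (at x)"
   and b: "\<forall>x>1. \<bar>\<psi>' x\<bar> \<le> C * x powr (\<alpha>-1) \<and> \<bar>\<psi>'' x\<bar> \<le> C * x powr (-1) * (x-1) powr (\<alpha>-1)"
   and \<beta>: "0 < \<beta>" "\<beta> < 1" and H: "H > 0" and \<alpha>: "\<alpha> \<ge> 1" and p1: "\<psi>' 1 = \<beta> * \<psi> 1"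
  defines "g \<equiv> \<lambda>h. ((1+h) powr (2*\<beta>) + 1)*\<psi> 1 - 2*\<psi>(1+h)"
  shows "\<exists>K\<ge>0. \<forall>h. 0 < h \<and> h \<le> H \<longrightarrow> \<bar>g h\<bar> \<le> K*h^2"
proof -
  define g' where "g' = (\<lambda>h. 2*\<beta>*(1+h) powr (2*\<beta>-1) * \<psi> 1 - 2*\<psi>'(1+h))"
  define g'' where "g'' = (\<lambda>h. 2*\<beta>*(2*\<beta>-1)*(1+h) powr (2*\<beta>-2) * \<psi> 1 - 2*\<psi>''(1+h))"
  define K where "K = 2*\<beta>*\<bar>2*\<beta>-1\<bar>*\<bar>\<psi> 1\<bar> + 2*C*H powr (\<alpha>-1)"
  have K0: "K \<ge> 0" using \<beta> H C by (simp add: K_def)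
  have g''b: "\<bar>g'' x\<bar> \<le> K" if "0 < x" "x \<le> H" for x
  proof -
    have "(1+x) powr (2*\<beta>-2) \<le> (1+x) powr 0" using that \<beta> by (intro powr_mono) auto
    then have a: "(1+x) powr (2*\<beta>-2) \<le> 1" using that by simp
    have "(1+x) powr (-1) \<le> (1+x) powr 0" using that by (intro powr_mono) auto
    then have a2: "(1+x) powr (-1) \<le> 1" using that by simp
    have a3: "x powr (\<alpha>-1) \<le> H powr (\<alpha>-1)" using that \<alpha> by (intro powr_mono2) auto
    have "\<bar>\<psi>'' (1+x)\<bar> \<le> C * (1+x) powr (-1) * x powr (\<alpha>-1)" using b[rule_format, of "1+x"] that by simp
    also have "\<dots> \<le> C * 1 * H powr (\<alpha>-1)" using a2 a3 C
      by (intro mult_mono) auto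
    finally have c: "\<bar>\<psi>'' (1+x)\<bar> \<le> C * H powr (\<alpha>-1)" by simp
    have "\<bar>g'' x\<bar> \<le> 2*\<beta>*\<bar>2*\<beta>-1\<bar>*(1+x) powr (2*\<beta>-2) * \<bar>\<psi> 1\<bar> + 2*\<bar>\<psi>''(1+x)\<bar>"
      unfolding g''_def using \<beta> abs_triangle_ineq4[of "2*\<beta>*(2*\<beta>-1)*(1+x) powr (2*\<beta>-2) * \<psi> 1" "2*\<psi>''(1+x)"]
      by (simp add: abs_mult)
    also have "\<dots> \<le> 2*\<beta>*\<bar>2*\<beta>-1\<bar>*1 * \<bar>\<psi> 1\<bar> + 2*(C*H powr (\<alpha>-1))"
      using a c \<beta> by (intro add_mono mult_right_mono mult_left_mono) auto
    finally show ?thesis by (simp add: K_def)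
  qed
  have g'0: "g' 0 = 0" by (simp add: g'_def p1)
  have g'b: "\<bar>g' t\<bar> \<le> K * t" if t: "0 < t" "t \<le> H" for t
  proof -
    have dd: "\<And>x. 0 \<le> x \<Longrightarrow> x \<le> t \<Longrightarrow> DERIV g' x :> g'' x"
      unfolding g''_def g'_def using g_deriv(2)[OF S d1] by blast
    from MVT2[of 0 t, OF _ dd] t obtain z where z: "0 < z" "z < t" "g' t - g' 0 = (t - 0) * g'' z" by auto
    then have "\<bar>g' t\<bar> = t * \<bar>g'' z\<bar>" using g'0 t by (simp add: abs_mult)
    also have "\<dots> \<le> t * K" using g''b[of z] z t by (intro mult_left_mono) auto
    finally show ?thesis by (simp add: mult.commute)
  qed
  have g0: "g 0 = 0" by (simp add: g_def)
  show ?thesis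
  proof (intro exI[of _ K] conjI allI impI K0)
    fix h assume h: "0 < h \<and> h \<le> H"
    have dd: "\<And>x. 0 \<le> x \<Longrightarrow> x \<le> h \<Longrightarrow> DERIV g x :> g' x"
      unfolding g_def g'_def using g_deriv(1)[OF S d1] by blast
    from MVT2[of 0 h, OF _ dd] h obtain z where z: "0 < z" "z < h" "g h - g 0 = (h - 0) * g' z" by auto
    then have "\<bar>g h\<bar> = h * \<bar>g' z\<bar>" using g0 h by (simp add: abs_mult)
    also have "\<dots> \<le> h * (K * z)" using g'b[of z] z h by (intro mult_left_mono) auto
    also have "\<dots> \<le> h * (K * h)" using z h K0 by (intro mult_left_mono) auto
    finally show "\<bar>g h\<bar> \<le> K * h^2" by (simp add: power2_eq_square mult_ac)
  qed
qed



lemma u1_bound: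
  fixes g :: "real \<Rightarrow> real"
  assumes lam: "lam > 0" and K: "K \<ge> 0" and s: "s > 0" and n: "n \<ge> 0"
    and gb: "\<bar>g (1/s)\<bar> \<le> K * (1/s)^n"
  shows "\<bar>s powr \<alpha> * g (1/s) / (2*lam)\<bar> \<le> (K/(2*lam) + 1) * s powr (-(real n - \<alpha>))"
proof -
  have sp: "s powr \<alpha> > 0" using s by simp
  have e: "s powr \<alpha> * (1/s)^n = s powr (-(real n - \<alpha>))"
    using s by (simp add: powr_diff powr_realpow divide_simps powr_minus)
  have "\<bar>s powr \<alpha> * g (1/s) / (2*lam)\<bar> = s powr \<alpha> * \<bar>g (1/s)\<bar> / (2*lam)"
    using sp lam by (simp add: abs_mult)
  also have "\<dots> \<le> s powr \<alpha> * (K * (1/s)^n) / (2*lam)"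
    using sp lam gb by (intro divide_right_mono mult_left_mono) auto
  also have "\<dots> = K/(2*lam) * (s powr \<alpha> * (1/s)^n)"
    by simp
  also have "\<dots> = K/(2*lam) * s powr (-(real n - \<alpha>))"
    by (simp only: e)
  also have "\<dots> \<le> (K/(2*lam) + 1) * s powr (-(real n - \<alpha>))"
    by (intro mult_right_mono) auto
  finally show ?thesis .
qed


lemma D_formula:
  assumes P: "prob_space M" and G: "gaussian_process M X" and SS: "self_similar M X \<beta>" and s: "s > 0"
  shows "integral\<^sup>L M (\<lambda>\<omega>. (X (s + 1) \<omega> - X s \<omega>)^2) =
    ((s+1) powr (2*\<beta>) + s powr (2*\<beta>)) * integral\<^sup>L M (\<lambda>\<omega>. X 1 \<omega> * X 1 \<omega>)
    - 2 * s powr (2*\<beta>) * integral\<^sup>L M (\<lambda>\<omega>. X 1 \<omega> * X (1 + 1/s) \<omega>)"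
proof -
  have meas: "\<forall>t\<ge>0. X t \<in> borel_measurable M" using G by (simp add: gaussian_process_def)
  have iA: "integrable M (\<lambda>\<omega>. X (s+1) \<omega> ^ 2)" using gp_sq1[OF P G, of "s+1"] s by simp
  have iB: "integrable M (\<lambda>\<omega>. X s \<omega> ^ 2)" using gp_sq1[OF P G, of s] s by simp
  have iAB: "integrable M (\<lambda>\<omega>. (X (s+1) \<omega> - X s \<omega>) ^ 2)" using gp_sq2[OF P G, of s "s+1"] s by simp
  have iP0: "integrable M (\<lambda>\<omega>. (X (s+1) \<omega> ^ 2 + X s \<omega> ^ 2 - (X (s+1) \<omega> - X s \<omega>) ^ 2) / 2)"
    using iA iB iAB by auto
  have fe: "(\<lambda>\<omega>. X s \<omega> * X (s+1) \<omega>) = (\<lambda>\<omega>. (X (s+1) \<omega> ^ 2 + X s \<omega> ^ 2 - (X (s+1) \<omega> - X s \<omega>) ^ 2) / 2)"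
    by (auto simp: fun_eq_iff power2_eq_square algebra_simps)
  have iP: "integrable M (\<lambda>\<omega>. X s \<omega> * X (s+1) \<omega>)" using iP0 fe by simp
  have fe2: "(\<lambda>\<omega>. (X (s+1) \<omega> - X s \<omega>) ^ 2) = (\<lambda>\<omega>. X (s+1) \<omega> ^ 2 + X s \<omega> ^ 2 - 2 * (X s \<omega> * X (s+1) \<omega>))"
    by (auto simp: fun_eq_iff power2_eq_square algebra_simps)
  have "integral\<^sup>L M (\<lambda>\<omega>. (X (s+1) \<omega> - X s \<omega>) ^ 2) =
      integral\<^sup>L M (\<lambda>\<omega>. X (s+1) \<omega> ^ 2) + integral\<^sup>L M (\<lambda>\<omega>. X s \<omega> ^ 2) - 2 * integral\<^sup>L M (\<lambda>\<omega>. X s \<omega> * X (s+1) \<omega>)"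
    unfolding fe2 using iA iB iP by (simp add: Bochner_Integration.integral_add Bochner_Integration.integral_diff)
  also have "integral\<^sup>L M (\<lambda>\<omega>. X (s+1) \<omega> ^ 2) = (s+1) powr (2*\<beta>) * integral\<^sup>L M (\<lambda>\<omega>. X 1 \<omega> * X 1 \<omega>)"
    using ss_cov[OF P meas SS, of "s+1" 1 1] s by (simp add: power2_eq_square)
  also have "integral\<^sup>L M (\<lambda>\<omega>. X s \<omega> ^ 2) = s powr (2*\<beta>) * integral\<^sup>L M (\<lambda>\<omega>. X 1 \<omega> * X 1 \<omega>)"
    using ss_cov[OF P meas SS, of s 1 1] s by (simp add: power2_eq_square)
  also have "integral\<^sup>L M (\<lambda>\<omega>. X s \<omega> * X (s+1) \<omega>) = s powr (2*\<beta>) * integral\<^sup>L M (\<lambda>\<omega>. X 1 \<omega> * X (1 + 1/s) \<omega>)"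
  proof -
    have "s * (1 + 1/s) = s + 1" using s by (simp add: field_simps)
    then show ?thesis using ss_cov[OF P meas SS, of s 1 "1 + 1/s"] s by simp
  qed
  finally show ?thesis by (simp add: algebra_simps)
qed


theorem lemma4p1:
  fixes M :: "'a measure" and X :: "real \<Rightarrow> 'a \<Rightarrow> real"
    and \<beta> \<alpha> lam :: real and \<psi> :: "real \<Rightarrow> real"
  assumes "prob_space M"
    and "gaussian_process M X" and "centered_process M X"
    and "0 < \<beta>" and "\<beta> < 1"
    and "self_similar M X \<beta>"
    and "H1 (\<lambda>x. integral\<^sup>L M (\<lambda>\<omega>. X 1 \<omega> * X x \<omega>)) \<beta> \<alpha> lam \<psi>"
  shows "\<exists>u1 :: real \<Rightarrow> real. continuous_on {0<..} u1 \<and>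
     (\<forall>s>0. integral\<^sup>L M (\<lambda>\<omega>. (X (s + 1) \<omega> - X s \<omega>)^2)
              = 2 * lam * s powr (2 * \<beta> - \<alpha>) * (1 + u1 s)) \<and>
     (\<forall>\<eta>>0. \<exists>C\<eta>>0. \<forall>s\<ge>\<eta>.
        \<bar>u1 s\<bar> \<le> C\<eta> * s powr (- (if \<alpha> < 1 then 1 - \<alpha> else 2 - \<alpha>)))"
proof -
  note P = assms(1) and G = assms(2) and SS = assms(6) and \<beta> = assms(4,5)
  define \<phi> where "\<phi> = (\<lambda>x. integral\<^sup>L M (\<lambda>\<omega>. X 1 \<omega> * X x \<omega>))"
  from assms(7)[folded \<phi>_def, unfolded H1_def] obtain S \<psi>' \<psi>'' C where
    \<alpha>0: "0 < \<alpha>" and lam: "lam > 0" and phi: "\<forall>x\<ge>1. \<phi> x = - lam * (x - 1) powr \<alpha> + \<psi> x"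
    and S: "open S" "{1..} \<subseteq> S" and C: "C \<ge> 0"
    and d1: "\<forall>x\<in>S. (\<psi> has_real_derivative \<psi>' x) (at x) \<and> (\<psi>' has_real_derivative \<psi>'' x) (at x)"
    and b: "\<forall>x>1. \<bar>\<psi>' x\<bar> \<le> C * x powr (\<alpha> - 1) \<and> \<bar>\<psi>'' x\<bar> \<le> C * x powr (-1) * (x - 1) powr (\<alpha> - 1)"
    and p1: "\<alpha> \<ge> 1 \<longrightarrow> \<psi>' 1 = \<beta> * \<psi> 1"
    by blast
  define g where "g = (\<lambda>h. ((1+h) powr (2*\<beta>) + 1)*\<psi> 1 - 2*\<psi>(1+h))"
  define u1 where "u1 = (\<lambda>s. (((s+1) powr (2*\<beta>) + s powr (2*\<beta>)) * \<psi> 1 - 2 * s powr (2*\<beta>) * \<psi> (1 + 1/s))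
        / (2 * lam * s powr (2*\<beta> - \<alpha>)))"
  have phi1: "\<phi> 1 = \<psi> 1" using phi by simp
  have u1g: "u1 s = s powr \<alpha> * g (1/s) / (2*lam)" if s: "s > 0" for s
  proof -
    have "(s+1) powr (2*\<beta>) = s powr (2*\<beta>) * (1 + 1/s) powr (2*\<beta>)"
    proof -
      have "s + 1 = s * (1 + 1/s)" using s by (simp add: field_simps)
      then show ?thesis using s by (simp add: powr_mult)
    qed
    then have num: "((s+1) powr (2*\<beta>) + s powr (2*\<beta>)) * \<psi> 1 - 2 * s powr (2*\<beta>) * \<psi> (1 + 1/s) = s powr (2*\<beta>) * g (1/s)"
      unfolding g_def by (simp add: algebra_simps)
    have sp: "s powr (2*\<beta>) = s powr \<alpha> * s powr (2*\<beta> - \<alpha>)" by (simp add: powr_add[symmetric])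
    have nz: "s powr (2*\<beta> - \<alpha>) \<noteq> 0" using s by simp
    have "u1 s = (((s+1) powr (2*\<beta>) + s powr (2*\<beta>)) * \<psi> 1 - 2 * s powr (2*\<beta>) * \<psi> (1 + 1/s)) / (2 * lam * s powr (2*\<beta> - \<alpha>))"
      unfolding u1_def by simp
    also have "\<dots> = s powr (2*\<beta>) * g (1/s) / (2 * lam * s powr (2*\<beta> - \<alpha>))"
      by (simp only: num)
    also have "\<dots> = s powr \<alpha> * s powr (2*\<beta> - \<alpha>) * g (1/s) / (2 * lam * s powr (2*\<beta> - \<alpha>))"
      by (simp only: sp)
    also have "\<dots> = s powr \<alpha> * g (1/s) / (2*lam)" using nz lam by (simp add: field_simps)
    finally show ?thesis .
  qed
  have cont_psi: "continuous_on S \<psi>"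
    using d1 by (meson DERIV_isCont continuous_at_imp_continuous_on)
  have cont: "continuous_on {0<..} u1"
  proof -
    have c1: "continuous_on {0<..} (\<lambda>s::real. \<psi> (1 + 1/s))"
      by (rule continuous_on_compose2[OF cont_psi]) (use S in \<open>auto intro!: continuous_intros\<close>)
    show ?thesis unfolding u1_def using lam
      by (intro continuous_intros c1) auto
  qed
  have eq: "integral\<^sup>L M (\<lambda>\<omega>. (X (s + 1) \<omega> - X s \<omega>)^2) = 2 * lam * s powr (2 * \<beta> - \<alpha>) * (1 + u1 s)"
    if s: "s > 0" for s
  proof -
    have p: "\<phi> (1 + 1/s) = - lam * (1/s) powr \<alpha> + \<psi> (1 + 1/s)" using phi s by simp
    have e: "s powr (2*\<beta>) * (1/s) powr \<alpha> = s powr (2*\<beta> - \<alpha>)"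
      using s by (simp add: powr_diff powr_divide)
    have nz: "2 * lam * s powr (2*\<beta> - \<alpha>) \<noteq> 0" using lam s by simp
    have "integral\<^sup>L M (\<lambda>\<omega>. (X (s + 1) \<omega> - X s \<omega>)^2) =
        ((s+1) powr (2*\<beta>) + s powr (2*\<beta>)) * \<phi> 1 - 2 * s powr (2*\<beta>) * \<phi> (1 + 1/s)"
      using D_formula[OF P G SS s] unfolding \<phi>_def .
    also have "\<dots> = 2 * lam * (s powr (2*\<beta>) * (1/s) powr \<alpha>) + (((s+1) powr (2*\<beta>) + s powr (2*\<beta>)) * \<psi> 1 - 2 * s powr (2*\<beta>) * \<psi> (1 + 1/s))"
      unfolding phi1 p by (simp add: algebra_simps)
    also have "\<dots> = 2 * lam * s powr (2 * \<beta> - \<alpha>) * (1 + u1 s)"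
      unfolding e u1_def using nz by (simp add: field_simps)
    finally show ?thesis .
  qed
  have bnd: "\<exists>C\<eta>>0. \<forall>s\<ge>\<eta>. \<bar>u1 s\<bar> \<le> C\<eta> * s powr (- (if \<alpha> < 1 then 1 - \<alpha> else 2 - \<alpha>))"
    if \<eta>: "\<eta> > 0" for \<eta>
  proof (cases "\<alpha> < 1")
    case True
    obtain K where K: "K \<ge> 0" "\<forall>h. 0 < h \<and> h \<le> 1/\<eta> \<longrightarrow> \<bar>g h\<bar> \<le> K*h"
      using g_bound1[OF S(2) C d1 b \<beta>, of "1/\<eta>"] \<eta> True unfolding g_def by auto
    show ?thesis
    proof (intro exI[of _ "K/(2*lam) + 1"] conjI allI impI)
      have "0 \<le> K/(2*lam)" using K(1) lam by simp
      then show "K/(2*lam) + 1 > 0" by linarith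
      fix s assume s: "s \<ge> \<eta>"
      then have sp: "s > 0" using \<eta> by simp
      have "\<bar>g (1/s)\<bar> \<le> K * (1/s)^1" using K(2)[rule_format, of "1/s"] s sp \<eta>
        by (simp add: frac_le)
      from u1_bound[of lam K s 1 g \<alpha>, OF lam K(1) sp le0 this] show "\<bar>u1 s\<bar> \<le> (K/(2*lam) + 1) * s powr (- (if \<alpha> < 1 then 1 - \<alpha> else 2 - \<alpha>))"
        using True u1g[OF sp] by simp
    qed
  next
    case False
    obtain K where K: "K \<ge> 0" "\<forall>h. 0 < h \<and> h \<le> 1/\<eta> \<longrightarrow> \<bar>g h\<bar> \<le> K*h^2"
      using g_bound2[OF S(2) C d1 b \<beta>, of "1/\<eta>"] \<eta> False p1 unfolding g_def by auto
    show ?thesis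
    proof (intro exI[of _ "K/(2*lam) + 1"] conjI allI impI)
      have "0 \<le> K/(2*lam)" using K(1) lam by simp
      then show "K/(2*lam) + 1 > 0" by linarith
      fix s assume s: "s \<ge> \<eta>"
      then have sp: "s > 0" using \<eta> by simp
      have "\<bar>g (1/s)\<bar> \<le> K * (1/s)^2" using K(2)[rule_format, of "1/s"] s sp \<eta>
        by (simp add: frac_le)
      from u1_bound[of lam K s 2 g \<alpha>, OF lam K(1) sp le0 this] show "\<bar>u1 s\<bar> \<le> (K/(2*lam) + 1) * s powr (- (if \<alpha> < 1 then 1 - \<alpha> else 2 - \<alpha>))"
        using False u1g[OF sp] by simp
    qed
  qed
  show ?thesis using cont eq bnd by blast
qed


end
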